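(* Let $k\geq 2$, $t\geq 0$, and $n\geq k^2+tk(k-1)$ be integers such that $k^2+tk(k-1)$ divides $n$. If there exists a $(k^2+tk(k-1),k,1)$-RBIBD, then there is a coloring of the edges of the complete graph $K_n$ with $(t+1)k+1$ colors such that every monochromatic component has at most $\frac{n}{(t+1)k-t}$ vertices. In particular (the case $t=0$), if there exists an affine plane of order $k$, then there exists a coloring of the edges of $K_n$ with $k+1$ colors such that every monochromatic component has at most $\frac{n}{k}$ vertices.
   Context: A $(v,k,1)$-resolvable balanced incomplete block design ($(v,k,1)$-RBIBD) is a $k$-uniform hypergraph on $v$ vertices in which each pair of distinct vertices lies in exactly one edge, and whose edge set can be partitioned into perfect matchings. An affine plane of order $k$ is a $k$-uniform hypergraph on $k^2$ vertices with $k(k+1)$ edges such that each pair of distinct vertices lies in exactly one edge (equivalently a $(k^2,k,1)$-RBIBD). A monochromatic component is a maximal connected subgraph all of whose edges have the same color. *)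

theory Defs
  imports Complex_Main "HOL-Library.Disjoint_Sets"
begin

definition pair_design :: "'a set \<Rightarrow> 'a set set \<Rightarrow> nat \<Rightarrow> bool" where
  "pair_design V E k \<longleftrightarrow> finite V \<and> (\<forall>e\<in>E. e \<subseteq> V \<and> card e = k) \<and>
     (\<forall>x\<in>V. \<forall>y\<in>V. x \<noteq> y \<longrightarrow> (\<exists>!e. e \<in> E \<and> x \<in> e \<and> y \<in> e))"

definition perfect_matching :: "'a set \<Rightarrow> 'a set set \<Rightarrow> bool" where
  "perfect_matching V M \<longleftrightarrow>
     (\<forall>e1\<in>M. \<forall>e2\<in>M. e1 \<noteq> e2 \<longrightarrow> e1 \<inter> e2 = {}) \<and> \<Union>M = V"

definition is_rbibd :: "'a set \<Rightarrow> 'a set set \<Rightarrow> nat \<Rightarrow> nat \<Rightarrow> bool" where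
  "is_rbibd V E v k \<longleftrightarrow> pair_design V E k \<and> card V = v \<and>
     (\<exists>P. partition_on E P \<and> (\<forall>M\<in>P. perfect_matching V M))"

definition rbibd_exists :: "nat \<Rightarrow> nat \<Rightarrow> bool" where
  "rbibd_exists v k \<longleftrightarrow> (\<exists>(V::nat set) E. is_rbibd V E v k)"

definition affine_plane_exists :: "nat \<Rightarrow> bool" where
  "affine_plane_exists k \<longleftrightarrow> (\<exists>(V::nat set) E. pair_design V E k \<and> card V = k^2 \<and>
      finite E \<and> card E = k * (k + 1))"

definition edge_coloring :: "nat \<Rightarrow> nat \<Rightarrow> (nat \<Rightarrow> nat \<Rightarrow> nat) \<Rightarrow> bool" where
  "edge_coloring n r c \<longleftrightarrow>
     (\<forall>u<n. \<forall>v<n. u \<noteq> v \<longrightarrow> c u v = c v u \<and> c u v < r)"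

definition col_edge :: "nat \<Rightarrow> (nat \<Rightarrow> nat \<Rightarrow> nat) \<Rightarrow> nat \<Rightarrow> nat \<Rightarrow> nat \<Rightarrow> bool" where
  "col_edge n c i u v \<longleftrightarrow> u < n \<and> v < n \<and> u \<noteq> v \<and> c u v = i"

definition mono_component :: "nat \<Rightarrow> (nat \<Rightarrow> nat \<Rightarrow> nat) \<Rightarrow> nat \<Rightarrow> nat \<Rightarrow> nat set" where
  "mono_component n c i x = {y. (col_edge n c i)\<^sup>*\<^sup>* x y}"

end

theory Submission
  imports Defs
begin


lemma count_mod:
  fixes v n :: nat
  assumes "v > 0" "v dvd n" "T \<subseteq> {0..<v}"
  shows "card {y. y < n \<and> y mod v \<in> T} = (n div v) * card T"
proof -
  let ?f = "\<lambda>(a::nat,b::nat). a*v + b"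
  have inj: "inj_on ?f ({0..<n div v} \<times> T)"
  proof (rule inj_onI, clarsimp)
    fix a b a' b' assume "b \<in> T" "b' \<in> T" and eq: "a*v+b = a'*v+b'"
    hence "b < v" "b' < v" using assms(3) by auto
    hence "(a*v+b) div v = a" "(a'*v+b') div v = a'" "(a*v+b) mod v = b" "(a'*v+b') mod v = b'"
      using assms(1) by auto
    thus "a = a' \<and> b = b'" using eq by metis
  qed
  have img: "?f ` ({0..<n div v} \<times> T) = {y. y < n \<and> y mod v \<in> T}"
  proof (rule set_eqI, rule iffI)
    fix y assume "y \<in> ?f ` ({0..<n div v} \<times> T)"
    then obtain a b where ab: "a < n div v" "b \<in> T" "y = a*v+b" by auto
    have "b < v" using ab assms(3) by auto
    have "(a+1)*v \<le> (n div v)*v" using ab by (intro mult_right_mono) auto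
    also have "\<dots> = n" using assms(2) by simp
    finally have "y < n" using ab \<open>b<v\<close> by (simp add: algebra_simps)
    moreover have "y mod v = b" using ab \<open>b<v\<close> by simp
    ultimately show "y \<in> {y. y < n \<and> y mod v \<in> T}" using ab by simp
  next
    fix y assume y: "y \<in> {y. y < n \<and> y mod v \<in> T}"
    have "y div v < n div v" using y assms
      by (metis dvd_div_mult_self div_less_iff_less_mult mem_Collect_eq)
    moreover have "y = ?f (y div v, y mod v)" by simp
    ultimately show "y \<in> ?f ` ({0..<n div v} \<times> T)" using y by force
  qed
  have "card {y. y < n \<and> y mod v \<in> T} = card ({0..<n div v} \<times> T)"
    using card_image[OF inj] img by simp
  also have "\<dots> = (n div v) * card T" by (simp add: card_cartesian_product)
  finally show ?thesis .
qed


lemma blowup: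
  fixes V :: "nat set" and Q :: "nat \<Rightarrow> nat \<Rightarrow> nat set" and n v r k :: nat
  assumes finV: "finite V" and cardV: "card V = v" and vpos: "v > 0" and vdvd: "v dvd n"
  and k1: "k \<ge> 1" and rpos: "r > 0"
  and Qrefl: "\<And>i p. i < r \<Longrightarrow> p \<in> V \<Longrightarrow> p \<in> Q i p"
  and Qsub: "\<And>i p. i < r \<Longrightarrow> p \<in> V \<Longrightarrow> Q i p \<subseteq> V"
  and Qcard: "\<And>i p. i < r \<Longrightarrow> p \<in> V \<Longrightarrow> card (Q i p) \<le> k"
  and Qtr: "\<And>i p q. i < r \<Longrightarrow> p \<in> V \<Longrightarrow> q \<in> Q i p \<Longrightarrow> Q i q = Q i p"
  and Qcov: "\<And>p q. p \<in> V \<Longrightarrow> q \<in> V \<Longrightarrow> p \<noteq> q \<Longrightarrow> \<exists>i<r. q \<in> Q i p"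
  shows "\<exists>c. edge_coloring n r c \<and>
     (\<forall>i x. x < n \<longrightarrow> card (mono_component n c i x) \<le> k * (n div v))"
proof -
  obtain h where h: "bij_betw h {0..<v} V" using ex_bij_betw_nat_finite[OF finV] cardV by auto
  define g where "g y = h (y mod v)" for y
  have gV: "g y \<in> V" for y unfolding g_def using h vpos by (auto simp: bij_betw_def)
  have symm: "q \<in> Q i p \<longleftrightarrow> p \<in> Q i q" if "i < r" "p \<in> V" "q \<in> V" for i p q
    using Qtr Qrefl that by metis
  define c where "c a b = (if g a = g b then 0 else (LEAST i. i < r \<and> g b \<in> Q i (g a)))" for a b
  have csym: "c a b = c b a" for a b
  proof -
    have "(\<lambda>i. i < r \<and> g b \<in> Q i (g a)) = (\<lambda>i. i < r \<and> g a \<in> Q i (g b))"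
      using symm gV by blast
    thus ?thesis unfolding c_def by (simp add: eq_commute)
  qed
  have cprop: "c a b < r \<and> g b \<in> Q (c a b) (g a)" if ne: "g a \<noteq> g b" for a b
  proof -
    obtain i where "i < r" "g b \<in> Q i (g a)" using Qcov[OF gV[of a] gV[of b] ne] by blast
    hence "(LEAST i. i < r \<and> g b \<in> Q i (g a)) < r \<and> g b \<in> Q (LEAST i. i < r \<and> g b \<in> Q i (g a)) (g a)"
      by (metis (mono_tags, lifting) LeastI)
    thus ?thesis using that unfolding c_def by simp
  qed
  have ec: "edge_coloring n r c"
    unfolding edge_coloring_def using csym cprop rpos by (auto simp: c_def)
  define Q' where "Q' i p = (if i < r then Q i p else {p})" for i p
  have Q'sub: "Q' i p \<subseteq> V" "card (Q' i p) \<le> k" if "p \<in> V" for i p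
    using Qsub Qcard that k1 by (auto simp: Q'_def)
  have inv: "(col_edge n c i)\<^sup>*\<^sup>* x y \<Longrightarrow> Q' i (g y) = Q' i (g x) \<and> (y = x \<or> y < n)" for i x y
  proof (induction rule: rtranclp_induct)
    case base then show ?case by simp
  next
    case (step a b)
    have "Q' i (g b) = Q' i (g a)"
    proof (cases "g a = g b")
      case False
      with step(2) cprop have "i < r" "g b \<in> Q i (g a)" unfolding col_edge_def by auto
      thus ?thesis using Qtr gV unfolding Q'_def by simp
    qed simp
    with step show ?case unfolding col_edge_def by simp
  qed
  have "card (mono_component n c i x) \<le> k * (n div v)" if "x < n" for i x
  proof -
    define S where "S = Q' i (g x)"
    define T where "T = {j\<in>{0..<v}. h j \<in> S}"
    have "mono_component n c i x \<subseteq> {y. y < n \<and> y mod v \<in> T}"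
    proof
      fix y assume "y \<in> mono_component n c i x"
      hence "Q' i (g y) = S \<and> (y = x \<or> y < n)" using inv unfolding mono_component_def S_def by auto
      moreover have "g y \<in> Q' i (g y)" using Qrefl gV by (auto simp: Q'_def)
      ultimately show "y \<in> {y. y < n \<and> y mod v \<in> T}" using that vpos
        unfolding T_def g_def by auto
    qed
    hence "card (mono_component n c i x) \<le> card {y. y < n \<and> y mod v \<in> T}"
      by (intro card_mono) auto
    also have "\<dots> = (n div v) * card T" by (rule count_mod[OF vpos vdvd]) (auto simp: T_def)
    also have "card T \<le> k"
    proof -
      have "card T = card (h ` T)" using h by (intro card_image[symmetric])
          (auto simp: T_def bij_betw_def intro: inj_on_subset)
      also have "\<dots> \<le> card S" using Q'sub(1)[OF gV[of x]] finV by (intro card_mono) (auto simp: T_def S_def intro: finite_subset)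
      also have "\<dots> \<le> k" using Q'sub gV S_def by auto
      finally show ?thesis .
    qed
    hence "(n div v) * card T \<le> k * (n div v)" by simp
    finally show ?thesis .
  qed
  with ec show ?thesis by blast
qed


lemma pd_unique:
  assumes "pair_design V E k" "e1 \<in> E" "e2 \<in> E" "p \<in> e1" "p \<in> e2" "q \<in> e1" "q \<in> e2" "p \<noteq> q"
  shows "e1 = e2"
  using assms unfolding pair_design_def by blast

lemma pd_finE:
  assumes "pair_design V E k" shows "finite E"
proof -
  have "E \<subseteq> Pow V" using assms unfolding pair_design_def by auto
  thus ?thesis using assms unfolding pair_design_def by (metis finite_Pow_iff finite_subset)
qed

lemma blocks_through:
  assumes pd: "pair_design V E k" and k2: "k \<ge> 2" and p: "p \<in> V"
  shows "card {e\<in>E. p \<in> e} * (k - 1) = card V - 1"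
proof -
  let ?B = "{e\<in>E. p \<in> e}"
  have finV: "finite V" using pd unfolding pair_design_def by auto
  have finB: "finite ?B" using pd_finE[OF pd] by auto
  have sub: "\<And>e. e \<in> E \<Longrightarrow> e \<subseteq> V \<and> card e = k" using pd unfolding pair_design_def by auto
  have U: "(\<Union>e\<in>?B. e - {p}) = V - {p}"
  proof
    show "(\<Union>e\<in>?B. e - {p}) \<subseteq> V - {p}" using sub by auto
    show "V - {p} \<subseteq> (\<Union>e\<in>?B. e - {p})"
    proof
      fix q assume "q \<in> V - {p}"
      then obtain e where "e \<in> E" "p \<in> e" "q \<in> e" using pd p unfolding pair_design_def by blast
      thus "q \<in> (\<Union>e\<in>?B. e - {p})" using \<open>q \<in> V - {p}\<close> by auto
    qed
  qed
  have "card (\<Union>e\<in>?B. e - {p}) = (\<Sum>e\<in>?B. card (e - {p}))"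
  proof (rule card_UN_disjoint[OF finB])
    show "\<forall>e\<in>?B. finite (e - {p})" using sub finV by (auto intro: finite_subset)
    show "\<forall>e1\<in>?B. \<forall>e2\<in>?B. e1 \<noteq> e2 \<longrightarrow> (e1 - {p}) \<inter> (e2 - {p}) = {}"
      using pd_unique[OF pd] by blast
  qed
  also have "\<dots> = (\<Sum>e\<in>?B. k - 1)"
  proof (rule sum.cong[OF refl])
    fix e assume "e \<in> ?B"
    hence "card e = k" "p \<in> e" "finite e" using sub finV by (auto intro: finite_subset)
    thus "card (e - {p}) = k - 1" by simp
  qed
  also have "\<dots> = card ?B * (k - 1)" by simp
  finally show ?thesis using U finV p by simp
qed

lemma playfair:
  assumes pd: "pair_design V E k" and k2: "k \<ge> 2" and cV: "card V = k^2"
    and L: "L \<in> E" and p: "p \<in> V"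
  shows "\<exists>!e. e \<in> E \<and> p \<in> e \<and> (e = L \<or> e \<inter> L = {})"
proof (cases "p \<in> L")
  case True
  then show ?thesis using L by blast
next
  case False
  let ?B = "{e\<in>E. p \<in> e}"
  let ?M = "{e\<in>?B. e \<inter> L \<noteq> {}}"
  have finV: "finite V" using pd unfolding pair_design_def by auto
  have finB: "finite ?B" using pd_finE[OF pd] by auto
  have sub: "\<And>e. e \<in> E \<Longrightarrow> e \<subseteq> V \<and> card e = k" using pd unfolding pair_design_def by auto
  have "card ?B * (k - 1) = k^2 - 1" using blocks_through[OF pd k2 p] cV by simp
  also have "k^2 - 1 = (k + 1) * (k - 1)" using k2
    by (simp add: power2_eq_square algebra_simps diff_mult_distrib2)
  finally have "card ?B * (k - 1) = (k + 1) * (k - 1)" .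
  moreover have "k - 1 \<noteq> 0" using k2 by simp
  ultimately have cB: "card ?B = k + 1" by (metis mult_right_cancel)
  define f where "f q = (THE e. e \<in> E \<and> p \<in> e \<and> q \<in> e)" for q
  have fq: "f q \<in> E \<and> p \<in> f q \<and> q \<in> f q" if "q \<in> L" for q
  proof -
    have "q \<in> V" "q \<noteq> p" using that sub L False by auto
    hence "\<exists>!e. e \<in> E \<and> p \<in> e \<and> q \<in> e" using pd p unfolding pair_design_def by blast
    thus ?thesis unfolding f_def by (rule theI')
  qed
  have injf: "inj_on f L"
  proof (rule inj_onI)
    fix q1 q2 assume q: "q1 \<in> L" "q2 \<in> L" "f q1 = f q2"
    show "q1 = q2"
    proof (rule ccontr)
      assume "q1 \<noteq> q2"
      hence "f q1 = L" using pd_unique[OF pd, of "f q1" L q1 q2] fq q L by auto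
      thus False using fq[OF q(1)] False by simp
    qed
  qed
  have imgf: "f ` L = ?M"
  proof
    show "f ` L \<subseteq> ?M" using fq by blast
    show "?M \<subseteq> f ` L"
    proof
      fix e assume e: "e \<in> ?M"
      then obtain q where q: "q \<in> e" "q \<in> L" by auto
      have "q \<noteq> p" using q False by auto
      have "e = f q" using pd_unique[OF pd, of e "f q" p q] e fq[OF q(2)] q \<open>q \<noteq> p\<close> by auto
      thus "e \<in> f ` L" using q by auto
    qed
  qed
  have "card ?M = k" using card_image[OF injf] imgf sub L by simp
  moreover have "finite ?M" using finB by (rule finite_subset[rotated]) auto
  ultimately have "card (?B - ?M) = 1" using cB finB by (subst card_Diff_subset) auto
  then obtain e0 where e0: "?B - ?M = {e0}" by (rule card_1_singletonE)
  show ?thesis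
  proof (rule ex1I[of _ e0])
    show "e0 \<in> E \<and> p \<in> e0 \<and> (e0 = L \<or> e0 \<inter> L = {})" using e0 by auto
    fix e assume "e \<in> E \<and> p \<in> e \<and> (e = L \<or> e \<inter> L = {})"
    hence "e \<in> ?B - ?M" using False by auto
    thus "e = e0" using e0 by auto
  qed
qed



lemma ec_mono: "edge_coloring n r c \<Longrightarrow> r \<le> r' \<Longrightarrow> edge_coloring n r' c"
  unfolding edge_coloring_def by fastforce

lemma part1:
  fixes k t n v :: nat
  assumes k2: "k \<ge> 2" and vdef: "v = k^2 + t * k * (k - 1)" and vdvd: "v dvd n"
    and ex: "rbibd_exists v k"
  shows "\<exists>c. edge_coloring n ((t + 1) * k + 1) c \<and>
     (\<forall>i x. x < n \<longrightarrow> card (mono_component n c i x) \<le> k * (n div v))"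
proof -
  obtain V :: "nat set" and E where rb: "is_rbibd V E v k" using ex unfolding rbibd_exists_def by blast
  then obtain P where pd: "pair_design V E k" and cV: "card V = v"
    and part: "partition_on E P" and pm: "\<And>M. M \<in> P \<Longrightarrow> perfect_matching V M"
    unfolding is_rbibd_def by blast
  have finV: "finite V" using pd unfolding pair_design_def by auto
  have pdu: "\<forall>x\<in>V. \<forall>y\<in>V. x \<noteq> y \<longrightarrow> (\<exists>!e. e \<in> E \<and> x \<in> e \<and> y \<in> e)" using pd unfolding pair_design_def by auto
  have sub: "\<And>e. e \<in> E \<Longrightarrow> e \<subseteq> V \<and> card e = k" using pd unfolding pair_design_def by auto
  have vpos: "v > 0" using vdef k2 by simp
  have PE: "\<Union>P = E" and disj: "disjoint P" using part unfolding partition_on_def by auto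
  have finP: "finite P" using pd_finE[OF pd] PE by (metis finite_UnionD)
  have um: "\<exists>!e. e \<in> M \<and> p \<in> e" if MP: "M \<in> P" and pV: "p \<in> V" for M p
  proof -
    have "\<Union>M = V" "\<forall>e1\<in>M. \<forall>e2\<in>M. e1 \<noteq> e2 \<longrightarrow> e1 \<inter> e2 = {}"
      using pm[OF MP] unfolding perfect_matching_def by auto
    then obtain e where e: "e \<in> M" "p \<in> e" using pV by blast
    show ?thesis
    proof (rule ex1I[of _ e])
      show "e \<in> M \<and> p \<in> e" using e by simp
      fix e' assume "e' \<in> M \<and> p \<in> e'"
      thus "e' = e" using e \<open>\<forall>e1\<in>M. \<forall>e2\<in>M. e1 \<noteq> e2 \<longrightarrow> e1 \<inter> e2 = {}\<close> by blast
    qed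
  qed
  have "V \<noteq> {}" using vpos cV by auto
  then obtain p0 where p0: "p0 \<in> V" by blast
  let ?B = "{e\<in>E. p0 \<in> e}"
  have "card ?B * (k - 1) = v - 1" using blocks_through[OF pd k2 p0] cV by simp
  also have "v - 1 = ((t + 1) * k + 1) * (k - 1)"
  proof -
    obtain j where j: "k = j + 2" using k2 by (metis add.commute le_Suc_ex)
    show ?thesis unfolding vdef j by (simp add: power2_eq_square algebra_simps)
  qed
  finally have "card ?B * (k - 1) = ((t + 1) * k + 1) * (k - 1)" .
  moreover have "k - 1 \<noteq> 0" using k2 by simp
  ultimately have cB: "card ?B = (t + 1) * k + 1" by (metis mult_right_cancel)
  have cPle: "card P \<le> card ?B"
  proof -
    define f where "f M = (THE e. e \<in> M \<and> p0 \<in> e)" for M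
    have fM: "f M \<in> M \<and> p0 \<in> f M" if "M \<in> P" for M
      unfolding f_def using um[OF that p0] by (rule theI')
    have "inj_on f P"
    proof (rule inj_onI)
      fix M1 M2 assume "M1 \<in> P" "M2 \<in> P" "f M1 = f M2"
      thus "M1 = M2" using fM disjointD[OF disj] by (metis IntI empty_iff)
    qed
    moreover have "f ` P \<subseteq> ?B" using fM PE by blast
    ultimately show ?thesis using pd_finE[OF pd] by (intro card_inj_on_le) auto
  qed
  obtain idx where idx: "bij_betw idx {0..<card P} P" using ex_bij_betw_nat_finite[OF finP] by blast
  define Q where "Q i p = (THE e. e \<in> idx i \<and> p \<in> e)" for i p
  have Qp: "Q i p \<in> idx i \<and> p \<in> Q i p" if "i < card P" "p \<in> V" for i p
  proof -
    have "idx i \<in> P" using idx that by (auto simp: bij_betw_def)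
    show ?thesis using um[OF \<open>idx i \<in> P\<close> that(2)] unfolding Q_def by (rule theI')
  qed
  have QE: "Q i p \<in> E" if "i < card P" "p \<in> V" for i p
    using Qp[OF that] idx that PE by (auto simp: bij_betw_def)
  have Qeq: "Q i p = e" if "i < card P" "p \<in> V" "e \<in> idx i" "p \<in> e" for i p e
  proof -
    have "idx i \<in> P" using idx that by (auto simp: bij_betw_def)
    show ?thesis unfolding Q_def using um[OF \<open>idx i \<in> P\<close> that(2)] that(3,4) by (intro the1_equality) auto
  qed
  have rpos: "card P > 0"
  proof -
    have "E \<noteq> {}"
    proof -
      have "k^2 \<ge> 2 * 2" using k2 unfolding power2_eq_square by (intro mult_mono) auto
      hence "card V \<ge> 2" using cV vdef by simp
      hence "\<not> card V \<le> Suc 0" by simp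
      then obtain q where "q \<in> V" "q \<noteq> p0" using p0 card_le_Suc0_iff_eq[OF finV] by blast
      hence "\<exists>!e. e \<in> E \<and> p0 \<in> e \<and> q \<in> e" using pdu p0 by blast
      thus ?thesis by blast
    qed
    thus ?thesis using PE finP by (auto simp: card_gt_0_iff)
  qed
  have "\<exists>c. edge_coloring n (card P) c \<and>
     (\<forall>i x. x < n \<longrightarrow> card (mono_component n c i x) \<le> k * (n div v))"
  proof (rule blowup[OF finV cV vpos vdvd _ rpos])
    show "k \<ge> 1" using k2 by simp
    show "\<And>i p. i < card P \<Longrightarrow> p \<in> V \<Longrightarrow> p \<in> Q i p" using Qp by blast
    show "\<And>i p. i < card P \<Longrightarrow> p \<in> V \<Longrightarrow> Q i p \<subseteq> V" using QE sub by blast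
    show "\<And>i p. i < card P \<Longrightarrow> p \<in> V \<Longrightarrow> card (Q i p) \<le> k" using QE sub by simp
    show "\<And>i p q. i < card P \<Longrightarrow> p \<in> V \<Longrightarrow> q \<in> Q i p \<Longrightarrow> Q i q = Q i p"
    proof -
      fix i p q assume a: "i < card P" "p \<in> V" "q \<in> Q i p"
      hence "q \<in> V" using QE sub by blast
      thus "Q i q = Q i p" using Qeq[OF a(1) \<open>q \<in> V\<close>] Qp[OF a(1,2)] a(3) by blast
    qed
    show "\<And>p q. p \<in> V \<Longrightarrow> q \<in> V \<Longrightarrow> p \<noteq> q \<Longrightarrow> \<exists>i<card P. q \<in> Q i p"
    proof -
      fix p q assume a: "p \<in> V" "q \<in> V" "p \<noteq> q"
      have "\<exists>!e. e \<in> E \<and> p \<in> e \<and> q \<in> e" using pdu a by blast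
      then obtain e where e: "e \<in> E" "p \<in> e" "q \<in> e" by blast
      then obtain M where "M \<in> P" "e \<in> M" using PE by blast
      moreover have "P = idx ` {0..<card P}" using idx by (simp add: bij_betw_def)
      ultimately have "M \<in> idx ` {0..<card P}" by simp
      then obtain i where i: "i < card P" "idx i = M" by auto
      have "Q i p = e" using Qeq[OF i(1) a(1)] i e \<open>e \<in> M\<close> by blast
      thus "\<exists>i<card P. q \<in> Q i p" using i e by blast
    qed
  qed
  then obtain c where "edge_coloring n (card P) c" "\<forall>i x. x < n \<longrightarrow> card (mono_component n c i x) \<le> k * (n div v)" by blast
  moreover have "card P \<le> (t + 1) * k + 1" using cPle cB by simp
  ultimately show ?thesis using ec_mono by blast
qed


lemma part2:
  fixes k n :: nat
  assumes k2: "k \<ge> 2" and vdvd: "k^2 dvd n" and ex: "affine_plane_exists k"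
  shows "\<exists>c. edge_coloring n (k + 1) c \<and>
     (\<forall>i x. x < n \<longrightarrow> card (mono_component n c i x) \<le> k * (n div k^2))"
proof -
  obtain V :: "nat set" and E where pd: "pair_design V E k" and cV: "card V = k^2"
    using ex unfolding affine_plane_exists_def by blast
  have finV: "finite V" using pd unfolding pair_design_def by auto
  have pdu: "\<forall>x\<in>V. \<forall>y\<in>V. x \<noteq> y \<longrightarrow> (\<exists>!e. e \<in> E \<and> x \<in> e \<and> y \<in> e)"
    using pd unfolding pair_design_def by auto
  have sub: "\<And>e. e \<in> E \<Longrightarrow> e \<subseteq> V \<and> card e = k" using pd unfolding pair_design_def by auto
  have vpos: "k^2 > 0" using k2 by simp
  have "V \<noteq> {}" using vpos cV by auto
  then obtain p0 where p0: "p0 \<in> V" by blast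
  let ?B = "{e\<in>E. p0 \<in> e}"
  have "card ?B * (k - 1) = k^2 - 1" using blocks_through[OF pd k2 p0] cV by simp
  also have "k^2 - 1 = (k + 1) * (k - 1)" using k2
    by (simp add: power2_eq_square algebra_simps diff_mult_distrib2)
  finally have "card ?B * (k - 1) = (k + 1) * (k - 1)" .
  moreover have "k - 1 \<noteq> 0" using k2 by simp
  ultimately have cB: "card ?B = k + 1" by (metis mult_right_cancel)
  have finB: "finite ?B" using pd_finE[OF pd] by simp
  obtain idx where idx: "bij_betw idx {0..<k+1} ?B" using ex_bij_betw_nat_finite[OF finB] unfolding cB by blast
  have idxB: "idx i \<in> E" "p0 \<in> idx i" if "i < k + 1" for i
    using idx that by (auto simp: bij_betw_def)
  define Q where "Q i p = (THE e. e \<in> E \<and> p \<in> e \<and> (e = idx i \<or> e \<inter> idx i = {}))" for i p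
  have pu: "\<exists>!e. e \<in> E \<and> p \<in> e \<and> (e = idx i \<or> e \<inter> idx i = {})" if "i < k + 1" "p \<in> V" for i p
    using playfair[OF pd k2 cV idxB(1)[OF that(1)] that(2)] .
  have Qp: "Q i p \<in> E \<and> p \<in> Q i p \<and> (Q i p = idx i \<or> Q i p \<inter> idx i = {})"
    if "i < k + 1" "p \<in> V" for i p
    unfolding Q_def using pu[OF that] by (rule theI')
  have Qeq: "Q i p = e" if "i < k + 1" "p \<in> V" "e \<in> E" "p \<in> e" "e = idx i \<or> e \<inter> idx i = {}" for i p e
  proof -
    have "e \<in> E \<and> p \<in> e \<and> (e = idx i \<or> e \<inter> idx i = {})" using that(3-5) by blast
    thus ?thesis unfolding Q_def by (rule the1_equality[OF pu[OF that(1,2)]])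
  qed
  show ?thesis
  proof (rule blowup[OF finV cV vpos vdvd])
    show "k \<ge> 1" using k2 by simp
    show "k + 1 > 0" by simp
    show "\<And>i p. i < k + 1 \<Longrightarrow> p \<in> V \<Longrightarrow> p \<in> Q i p" using Qp by (rule conjunct1[OF conjunct2])
    show "\<And>i p. i < k + 1 \<Longrightarrow> p \<in> V \<Longrightarrow> Q i p \<subseteq> V" using sub[OF conjunct1[OF Qp]] by (rule conjunct1)
    show "\<And>i p. i < k + 1 \<Longrightarrow> p \<in> V \<Longrightarrow> card (Q i p) \<le> k" using sub[OF conjunct1[OF Qp]] by simp
    show "\<And>i p q. i < k + 1 \<Longrightarrow> p \<in> V \<Longrightarrow> q \<in> Q i p \<Longrightarrow> Q i q = Q i p"
    proof -
      fix i p q assume a: "i < k + 1" "p \<in> V" "q \<in> Q i p"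
      have QE: "Q i p \<in> E" and QD: "Q i p = idx i \<or> Q i p \<inter> idx i = {}" using Qp[OF a(1,2)] by auto
      have "q \<in> V" using sub[OF QE] a(3) by blast
      show "Q i q = Q i p" by (rule Qeq[OF a(1) \<open>q \<in> V\<close> QE a(3) QD])
    qed
    show "\<And>p q. p \<in> V \<Longrightarrow> q \<in> V \<Longrightarrow> p \<noteq> q \<Longrightarrow> \<exists>i<k + 1. q \<in> Q i p"
    proof -
      fix p q assume a: "p \<in> V" "q \<in> V" "p \<noteq> q"
      have "\<exists>!e. e \<in> E \<and> p \<in> e \<and> q \<in> e" using pdu a by blast
      then obtain e where e: "e \<in> E" "p \<in> e" "q \<in> e" by blast
      obtain L where L: "L \<in> E" "p0 \<in> L" "L = e \<or> L \<inter> e = {}"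
        using playfair[OF pd k2 cV e(1) p0] by blast
      have "L \<in> ?B" using L by simp
      moreover have "?B = idx ` {0..<k+1}" using idx by (simp add: bij_betw_def)
      ultimately have "L \<in> idx ` {0..<k+1}" by simp
      then obtain i where i: "i < k + 1" "idx i = L" by auto
      have "e = idx i \<or> e \<inter> idx i = {}" using i L by blast
      hence "Q i p = e" using Qeq[OF i(1) a(1) e(1) e(2)] by blast
      thus "\<exists>i<k + 1. q \<in> Q i p" using i e by blast
    qed
  qed
qed

theorem fact4p2:
  fixes k t n :: nat
  assumes "k \<ge> 2"
    and "n \<ge> k^2 + t * k * (k - 1)"
    and "(k^2 + t * k * (k - 1)) dvd n"
  shows "(rbibd_exists (k^2 + t * k * (k - 1)) k \<longrightarrow>
           (\<exists>c. edge_coloring n ((t + 1) * k + 1) c \<and>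
              (\<forall>i x. x < n \<longrightarrow>
                 real (card (mono_component n c i x)) \<le> real n / (real ((t + 1) * k) - real t))))
       \<and> (t = 0 \<longrightarrow> affine_plane_exists k \<longrightarrow>
           (\<exists>c. edge_coloring n (k + 1) c \<and>
              (\<forall>i x. x < n \<longrightarrow>
                 real (card (mono_component n c i x)) \<le> real n / real k)))"
proof (intro conjI impI)
  define v where "v = k^2 + t * k * (k - 1)"
  obtain m where m: "n = v * m" using assms(3) unfolding v_def by blast
  have vpos: "v > 0" using assms(1) unfolding v_def by simp
  have ndiv: "n div v = m" using m vpos by simp
  have d: "real ((t + 1) * k) - real t > 0" "real v = real k * (real ((t + 1) * k) - real t)"
  proof -
    have "(t + 1) * 2 \<le> (t + 1) * k" using assms(1) by (intro mult_le_mono2)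
    hence "t < (t + 1) * k" by (simp add: algebra_simps)
    hence "real t < real ((t + 1) * k)" by (simp only: of_nat_less_iff)
    thus "real ((t + 1) * k) - real t > 0" by simp
    have "real v = real k ^ 2 + real t * real k * (real k - 1)" using assms(1) unfolding v_def
      by (simp add: of_nat_diff)
    thus "real v = real k * (real ((t + 1) * k) - real t)"
      by (simp add: power2_eq_square algebra_simps)
  qed
  have bound: "real (k * (n div v)) = real n / (real ((t + 1) * k) - real t)"
  proof -
    define D where "D = real ((t + 1) * k) - real t"
    have "real n = real v * real m" unfolding m by simp
    also have "\<dots> = real k * real m * D" using d(2) unfolding D_def by simp
    finally have "real n / D = real k * real m" using d(1) unfolding D_def by simp
    thus ?thesis unfolding ndiv D_def by simp
  qed
  {
    assume "rbibd_exists (k^2 + t * k * (k - 1)) k"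
    then obtain c where c: "edge_coloring n ((t + 1) * k + 1) c"
      "\<forall>i x. x < n \<longrightarrow> card (mono_component n c i x) \<le> k * (n div v)"
      using part1[OF assms(1) v_def assms(3)[folded v_def]] unfolding v_def by blast
    show "\<exists>c. edge_coloring n ((t + 1) * k + 1) c \<and>
              (\<forall>i x. x < n \<longrightarrow>
                 real (card (mono_component n c i x)) \<le> real n / (real ((t + 1) * k) - real t))"
      using c bound by (metis of_nat_le_iff)
  }
  {
    assume t0: "t = 0" and ap: "affine_plane_exists k"
    have "k^2 dvd n" using assms(3) t0 by simp
    then obtain c where c: "edge_coloring n (k + 1) c"
      "\<forall>i x. x < n \<longrightarrow> card (mono_component n c i x) \<le> k * (n div k^2)"
      using part2[OF assms(1) _ ap] by blast
    have "v = k^2" using t0 v_def by simp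
    moreover have "real n / (real ((t + 1) * k) - real t) = real n / real k" using t0 by simp
    ultimately have b2: "real (k * (n div k^2)) = real n / real k" using bound by simp
    show "\<exists>c. edge_coloring n (k + 1) c \<and>
              (\<forall>i x. x < n \<longrightarrow>
                 real (card (mono_component n c i x)) \<le> real n / real k)"
      using c b2 by (metis of_nat_le_iff)
  }
qed

end
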